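(* Suppose Assumptions A and B hold. Suppose moreover that for every $(\hat x,\hat t)\in\mathcal D_{\mathrm{SDP}}$ with $\mathcal F(\hat x)$ semidefinite, $(\hat x,\hat t)$ can be written as a convex combination of finitely many points $(x_\alpha,t_\alpha)\in\mathcal D_{\mathrm{SDP}}$ with $\operatorname{affdim}(\mathcal F(x_\alpha))>\operatorname{affdim}(\mathcal F(\hat x))$ for each $\alpha$. Then $\operatorname{conv}(\mathcal D)=\mathcal D_{\mathrm{SDP}}$ and $\mathrm{Opt}=\mathrm{Opt}_{\mathrm{SDP}}$.
   Context: Fix integers $N\ge 1$, $m_I,m_E\ge 0$, $m:=m_I+m_E\ge 1$; $[a,b]=\{a,\dots,b\}$, $[n]=[1,n]$. For $i\in[0,m]$ let $q_i(x)=x^\top A_ix+2b_i^\top x+c_i$ with $A_i\in\mathbb S^N$, $b_i\in\mathbb R^N$, $c_i\in\mathbb R$. $\mathrm{Opt}:=\inf\{q_0(x): q_i(x)\le 0\ \forall i\in[m_I],\ q_i(x)=0\ \forall i\in[m_I+1,m]\}$ and $\mathcal D:=\{(x,t)\in\mathbb R^N\times\mathbb R: q_0(x)\le 2t,\ q_i(x)\le0\ \forall i\in[m_I],\ q_i(x)=0\ \forall i\in[m_I+1,m]\}$. Let $Q_i=\begin{pmatrix}c_i& b_i^\top\\ b_i& A_i\end{pmatrix}$; $\mathrm{Opt}_{\mathrm{SDP}}:=\inf\{\langle Q_0,Y\rangle: Y=\begin{pmatrix}1&x^\top\\ x& X\end{pmatrix}\succeq 0,\ X\in\mathbb S^N,\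 \langle Q_i,Y\rangle\le 0\ \forall i\in[m_I],\ \langle Q_i,Y\rangle=0\ \forall i\in[m_I+1,m]\}$ and $\mathcal D_{\mathrm{SDP}}:=\{(x,t):\exists X\in\mathbb S^N$ with $Y=\begin{pmatrix}1&x^\top\\ x& X\end{pmatrix}\succeq0$, $\langle Q_0,Y\rangle\le 2t$, and the same constraints$\}$. For $\gamma\in\mathbb R^m$, $A(\gamma)=A_0+\sum\gamma_iA_i$, $q(\gamma,x)=q_0(x)+\sum\gamma_iq_i(x)$, $\Gamma:=\{\gamma: A(\gamma)\succeq0,\ \gamma_i\ge0\ \forall i\in[m_I]\}$. Assumption A: the QCQP is feasible and some $\gamma^*$ with $\gamma^*_i\ge0$ ($i\in[m_I]$) has $A(\gamma^* )\succ0$. Assumption B: for every $\hat x$, if $\sup_{\gamma\in\Gamma}q(\gamma,\hat x)$ is finite it is attained. Then $\mathcal F(\hat x):=\arg\max_{\gamma\in\Gamma}q(\gamma,\hat x)$, a nonempty face of $\Gamma$, defined whenever the supremum is finite (in particular for $(\hat x,\hat t)\in\mathcal D_{\mathrm{SDP}}$). A nonempty face is definite if it contains $\gamma$ with $A(\gamma)\succ0$, semidefinite otherwise. $\operatorname{affdim}$ denotes the dimension of the affine hull. *)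

theory Defs
  imports "HOL-Analysis.Analysis"
begin

text \<open>The space R^N is real^'n ('n finite, N = CARD('n)).
 The constraint index set [m] is the finite type 'm (m = CARD('m) >= 1);
 the inequality constraints are those indexed by a set Ineq (corresponding to [m_I]),
 the others are equalities (corresponding to [m_I+1,m]).
 The (N+1)x(N+1) matrices are indexed by 'n option, with None playing the role of index 0.\<close>

definition sym_mat :: "real^'k^'k \<Rightarrow> bool" where
  "sym_mat M \<longleftrightarrow> transpose M = M"

definition psd :: "real^'k^'k \<Rightarrow> bool" where
  "psd M \<longleftrightarrow> sym_mat M \<and> (\<forall>v. 0 \<le> v \<bullet> (M *v v))"

definition pd :: "real^'k^'k \<Rightarrow> bool" where
  "pd M \<longleftrightarrow> sym_mat M \<and> (\<forall>v. v \<noteq> 0 \<longrightarrow> 0 < v \<bullet> (M *v v))"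

definition qf :: "real^'n^'n \<Rightarrow> real^'n \<Rightarrow> real \<Rightarrow> real^'n \<Rightarrow> real" where
  "qf A b c x = x \<bullet> (A *v x) + 2 * (b \<bullet> x) + c"

definition frob :: "real^'k^'k \<Rightarrow> real^'k^'k \<Rightarrow> real" where
  "frob P Y = (\<Sum>i\<in>UNIV. \<Sum>j\<in>UNIV. P$i$j * Y$i$j)"

text \<open>Q = [[c, b^T],[b, A]] and Y = [[1, x^T],[x, X]].\<close>
definition Qmat :: "real^'n^'n \<Rightarrow> real^'n \<Rightarrow> real \<Rightarrow> real^('n option)^('n option)" where
  "Qmat A b c = (\<chi> i j. case (i, j) of (None, None) \<Rightarrow> c
      | (None, Some l) \<Rightarrow> b$l | (Some k, None) \<Rightarrow> b$k | (Some k, Some l) \<Rightarrow> A$k$l)"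

definition Ymat :: "real^'n \<Rightarrow> real^'n^'n \<Rightarrow> real^('n option)^('n option)" where
  "Ymat x X = (\<chi> i j. case (i, j) of (None, None) \<Rightarrow> 1
      | (None, Some l) \<Rightarrow> x$l | (Some k, None) \<Rightarrow> x$k | (Some k, Some l) \<Rightarrow> X$k$l)"

definition feasQ :: "'m set \<Rightarrow> ('m \<Rightarrow> real^'n^'n) \<Rightarrow> ('m \<Rightarrow> real^'n) \<Rightarrow> ('m \<Rightarrow> real)
    \<Rightarrow> real^'n \<Rightarrow> bool" where
  "feasQ Ineq A b c x \<longleftrightarrow> (\<forall>i\<in>Ineq. qf (A i) (b i) (c i) x \<le> 0)
      \<and> (\<forall>i. i \<notin> Ineq \<longrightarrow> qf (A i) (b i) (c i) x = 0)"

definition feasSDP :: "'m set \<Rightarrow> ('m \<Rightarrow> real^'n^'n) \<Rightarrow> ('m \<Rightarrow> real^'n) \<Rightarrow> ('m \<Rightarrow> real)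
    \<Rightarrow> real^'n \<Rightarrow> real^'n^'n \<Rightarrow> bool" where
  "feasSDP Ineq A b c x X \<longleftrightarrow> sym_mat X \<and> psd (Ymat x X)
      \<and> (\<forall>i\<in>Ineq. frob (Qmat (A i) (b i) (c i)) (Ymat x X) \<le> 0)
      \<and> (\<forall>i. i \<notin> Ineq \<longrightarrow> frob (Qmat (A i) (b i) (c i)) (Ymat x X) = 0)"

definition Opt :: "real^'n^'n \<Rightarrow> real^'n \<Rightarrow> real \<Rightarrow> 'm set \<Rightarrow> ('m \<Rightarrow> real^'n^'n)
    \<Rightarrow> ('m \<Rightarrow> real^'n) \<Rightarrow> ('m \<Rightarrow> real) \<Rightarrow> ereal" where
  "Opt A0 b0 c0 Ineq A b c = (INF x\<in>{x. feasQ Ineq A b c x}. ereal (qf A0 b0 c0 x))"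

definition OptSDP :: "real^'n^'n \<Rightarrow> real^'n \<Rightarrow> real \<Rightarrow> 'm set \<Rightarrow> ('m \<Rightarrow> real^'n^'n)
    \<Rightarrow> ('m \<Rightarrow> real^'n) \<Rightarrow> ('m \<Rightarrow> real) \<Rightarrow> ereal" where
  "OptSDP A0 b0 c0 Ineq A b c =
     (INF xX\<in>{(x, X). feasSDP Ineq A b c x X}.
        ereal (frob (Qmat A0 b0 c0) (Ymat (fst xX) (snd xX))))"

definition Dset :: "real^'n^'n \<Rightarrow> real^'n \<Rightarrow> real \<Rightarrow> 'm set \<Rightarrow> ('m \<Rightarrow> real^'n^'n)
    \<Rightarrow> ('m \<Rightarrow> real^'n) \<Rightarrow> ('m \<Rightarrow> real) \<Rightarrow> ((real^'n) \<times> real) set" where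
  "Dset A0 b0 c0 Ineq A b c = {(x, t). qf A0 b0 c0 x \<le> 2 * t \<and> feasQ Ineq A b c x}"

definition DSDP :: "real^'n^'n \<Rightarrow> real^'n \<Rightarrow> real \<Rightarrow> 'm set \<Rightarrow> ('m \<Rightarrow> real^'n^'n)
    \<Rightarrow> ('m \<Rightarrow> real^'n) \<Rightarrow> ('m \<Rightarrow> real) \<Rightarrow> ((real^'n) \<times> real) set" where
  "DSDP A0 b0 c0 Ineq A b c = {(x, t). \<exists>X. feasSDP Ineq A b c x X
       \<and> frob (Qmat A0 b0 c0) (Ymat x X) \<le> 2 * t}"

definition Agam :: "real^'n^'n \<Rightarrow> ('m::finite \<Rightarrow> real^'n^'n) \<Rightarrow> real^'m \<Rightarrow> real^'n^'n" where
  "Agam A0 A g = A0 + (\<Sum>i\<in>UNIV. g$i *\<^sub>R A i)"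

definition qgam :: "real^'n^'n \<Rightarrow> real^'n \<Rightarrow> real \<Rightarrow> ('m::finite \<Rightarrow> real^'n^'n)
    \<Rightarrow> ('m \<Rightarrow> real^'n) \<Rightarrow> ('m \<Rightarrow> real) \<Rightarrow> real^'m \<Rightarrow> real^'n \<Rightarrow> real" where
  "qgam A0 b0 c0 A b c g x = qf A0 b0 c0 x + (\<Sum>i\<in>UNIV. g$i * qf (A i) (b i) (c i) x)"

definition Gamma :: "real^'n^'n \<Rightarrow> 'm::finite set \<Rightarrow> ('m \<Rightarrow> real^'n^'n) \<Rightarrow> (real^'m) set" where
  "Gamma A0 Ineq A = {g. psd (Agam A0 A g) \<and> (\<forall>i\<in>Ineq. 0 \<le> g$i)}"

text \<open>\<F>(x) = argmax over \<Gamma> of q(\<cdot>,x) (meaningful when the supremum is finite).\<close>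
definition Fface :: "real^'n^'n \<Rightarrow> real^'n \<Rightarrow> real \<Rightarrow> 'm::finite set \<Rightarrow> ('m \<Rightarrow> real^'n^'n)
    \<Rightarrow> ('m \<Rightarrow> real^'n) \<Rightarrow> ('m \<Rightarrow> real) \<Rightarrow> real^'n \<Rightarrow> (real^'m) set" where
  "Fface A0 b0 c0 Ineq A b c x = {g \<in> Gamma A0 Ineq A.
      \<forall>g'\<in>Gamma A0 Ineq A. qgam A0 b0 c0 A b c g' x \<le> qgam A0 b0 c0 A b c g x}"

definition semidefinite_face :: "real^'n^'n \<Rightarrow> ('m::finite \<Rightarrow> real^'n^'n) \<Rightarrow> (real^'m) set \<Rightarrow> bool" where
  "semidefinite_face A0 A F \<longleftrightarrow> F \<noteq> {} \<and> \<not> (\<exists>g\<in>F. pd (Agam A0 A g))"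

end

theory Submission
  imports Defs
begin


lemma quad_expand: "(v::real^'k) \<bullet> (M *v v) = (\<Sum>i\<in>UNIV. \<Sum>j\<in>UNIV. v$i * M$i$j * v$j)"
  by (simp add: inner_vec_def matrix_vector_mult_def sum_distrib_left mult.assoc)
lemma bil_expand: "(u::real^'k) \<bullet> (M *v v) = (\<Sum>i\<in>UNIV. \<Sum>j\<in>UNIV. u$i * M$i$j * v$j)"
  by (simp add: inner_vec_def matrix_vector_mult_def sum_distrib_left mult.assoc)
lemma sym_entry: "sym_mat M \<Longrightarrow> M$i$j = M$j$i"
  unfolding sym_mat_def by (metis transpose_def vec_lambda_beta)
lemma bil_sym: assumes "sym_mat (M::real^'k^'k)" shows "(u::real^'k) \<bullet> (M *v v) = v \<bullet> (M *v u)"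
  unfolding bil_expand
  apply (subst sum.swap)
  apply (rule sum.cong, simp, rule sum.cong, simp)
  using sym_entry[OF assms] by (simp add: mult.commute mult.left_commute)
lemma quad_add: assumes "sym_mat (M::real^'k^'k)"
  shows "(u + w) \<bullet> (M *v (u + w)) = u \<bullet> (M *v u) + 2 * (u \<bullet> (M *v w)) + w \<bullet> (M *v w)"
  using bil_sym[OF assms, of w u]
  by (simp add: matrix_vector_right_distrib inner_add_left inner_add_right)
lemma quad_scale: "(s *\<^sub>R u) \<bullet> ((M::real^'k^'k) *v (s *\<^sub>R u)) = s^2 * (u \<bullet> (M *v u))"
  by (simp add: quad_expand sum_distrib_left power2_eq_square algebra_simps)
lemma bil_axis: "axis k 1 \<bullet> ((M::real^'k^'k) *v axis j 1) = M$k$j"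
  by (simp add: matrix_vector_mult_basis inner_axis' column_def)
lemma bil_axis2: "u \<bullet> ((M::real^'k^'k) *v axis j 1) = (\<Sum>i\<in>UNIV. u$i * M$i$j)"
  by (simp add: matrix_vector_mult_basis inner_vec_def column_def)
lemma bil_scale: "u \<bullet> ((M::real^'k^'k) *v (s *\<^sub>R w)) = s * (u \<bullet> (M *v w))"
  by (simp add: bil_expand sum_distrib_left algebra_simps)

lemma psd_diag0:
  assumes "psd (Z::real^'k^'k)" "Z$k$k = 0" shows "Z$k$j = 0"
proof (rule ccontr)
  assume ne: "Z$k$j \<noteq> 0"
  have sy: "sym_mat Z" and nn: "\<And>v. 0 \<le> v \<bullet> (Z *v v)" using assms(1) unfolding psd_def by auto
  define s where "s = - (Z$j$j + 1) / (2 * Z$k$j)"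
  have "0 \<le> (axis j 1 + s *\<^sub>R axis k 1) \<bullet> (Z *v (axis j 1 + s *\<^sub>R axis k 1))" by (rule nn)
  also have "\<dots> = Z$j$j + 2 * s * Z$k$j"
    unfolding quad_add[OF sy] quad_scale bil_scale bil_axis using assms(2) sym_entry[OF sy, of j k] by (simp add: bil_axis)
  also have "\<dots> = -1" using ne by (simp add: s_def field_simps)
  finally show False by simp
qed

lemma psd_diag_nonneg: "psd (Z::real^'k^'k) \<Longrightarrow> 0 \<le> Z$j$j"
  using bil_axis[of j Z j] unfolding psd_def by metis

lemma frob_zero_diag:
  assumes "psd (Z::real^'k^'k)" "\<forall>k. Z$k$k = 0" shows "frob G Z = 0"
  using psd_diag0[OF assms(1)] assms(2) by (simp add: frob_def)

lemma psd_frob_aux: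
  fixes G Z :: "real^'k^'k"
  assumes "psd G" shows "psd Z \<Longrightarrow> 0 \<le> frob G Z"
proof (induction "card {k. Z$k$k \<noteq> 0}" arbitrary: Z rule: less_induct)
  case less
  show ?case
  proof (cases "\<forall>k. Z$k$k = 0")
    case True thus ?thesis using frob_zero_diag[OF less.prems] by simp
  next
    case False
    then obtain j where jne: "Z$j$j \<noteq> 0" by auto
    have zpos: "0 < Z$j$j" using psd_diag_nonneg[OF less.prems, of j] jne by simp
    have sy: "sym_mat Z" and nn: "\<And>v. 0 \<le> v \<bullet> (Z *v v)" using less.prems unfolding psd_def by auto
    define w :: "real^'k" where "w = (\<chi> i. Z$i$j / sqrt (Z$j$j))"
    define Z' :: "real^'k^'k" where "Z' = (\<chi> i l. Z$i$l - Z$i$j * Z$l$j / Z$j$j)"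
    have wprod: "w$i * w$l = Z$i$j * Z$l$j / Z$j$j" for i l
      using zpos by (simp add: w_def field_simps)
    have Z'e: "Z'$i$l = Z$i$l - w$i * w$l" for i l by (simp add: Z'_def wprod)
    have split: "frob G Z = frob G Z' + w \<bullet> (G *v w)"
      unfolding frob_def quad_expand Z'e sum.distrib[symmetric]
      by (rule sum.cong, simp, rule sum.cong, simp) (simp add: algebra_simps)
    have symZ': "sym_mat Z'"
      unfolding sym_mat_def transpose_def Z'_def using sym_entry[OF sy]
      by (simp add: vec_eq_iff mult.commute)
    have quadZ': "v \<bullet> (Z' *v v) = v \<bullet> (Z *v v) - (\<Sum>i\<in>UNIV. v$i * Z$i$j)^2 / Z$j$j" for v
    proof -
      have "v \<bullet> (Z' *v v) = (\<Sum>i\<in>UNIV. \<Sum>l\<in>UNIV. v$i * Z$i$l * v$l - (v$i * Z$i$j) * (v$l * Z$l$j) / Z$j$j)"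
        unfolding quad_expand Z'_def by (simp add: algebra_simps)
      also have "\<dots> = v \<bullet> (Z *v v) - (\<Sum>i\<in>UNIV. \<Sum>l\<in>UNIV. (v$i * Z$i$j) * (v$l * Z$l$j)) / Z$j$j"
        by (simp add: quad_expand sum_subtractf sum_divide_distrib)
      also have "\<dots> = v \<bullet> (Z *v v) - (\<Sum>i\<in>UNIV. v$i * Z$i$j)^2 / Z$j$j"
        by (simp add: power2_eq_square sum_product)
      finally show ?thesis .
    qed
    have psdZ': "psd Z'"
      unfolding psd_def
    proof (intro conjI allI symZ')
      fix v :: "real^'k"
      define cc where "cc = (\<Sum>i\<in>UNIV. v$i * Z$i$j)"
      define a where "a = - cc / Z$j$j"
      have "0 \<le> (v + a *\<^sub>R axis j 1) \<bullet> (Z *v (v + a *\<^sub>R axis j 1))" by (rule nn)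
      also have "\<dots> = v \<bullet> (Z *v v) + 2 * a * cc + a^2 * Z$j$j"
      proof -
        have e1: "v \<bullet> (Z *v (a *\<^sub>R axis j 1)) = a * cc" unfolding bil_scale bil_axis2 cc_def ..
        have e2: "(a *\<^sub>R axis j 1) \<bullet> (Z *v (a *\<^sub>R axis j 1)) = a^2 * Z$j$j" unfolding quad_scale bil_axis ..
        show ?thesis unfolding quad_add[OF sy] e1 e2 by simp
      qed
      also have "\<dots> = v \<bullet> (Z' *v v)" unfolding quadZ' cc_def[symmetric] a_def
        using zpos by (simp add: field_simps power2_eq_square)
      finally show "0 \<le> v \<bullet> (Z' *v v)" .
    qed
    have sub: "{k. Z'$k$k \<noteq> 0} \<subset> {k. Z$k$k \<noteq> 0}"
    proof
      show "{k. Z'$k$k \<noteq> 0} \<subseteq> {k. Z$k$k \<noteq> 0}"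
        using psd_diag0[OF less.prems] by (auto simp: Z'_def)
      show "{k. Z'$k$k \<noteq> 0} \<noteq> {k. Z$k$k \<noteq> 0}"
      proof -
        have "Z'$j$j = 0" using zpos by (simp add: Z'_def)
        thus ?thesis using jne by blast
      qed
    qed
    have "0 \<le> frob G Z'"
      by (rule less.hyps[OF psubset_card_mono[OF _ sub] psdZ']) simp
    moreover have "0 \<le> w \<bullet> (G *v w)" using assms unfolding psd_def by auto
    ultimately show ?thesis using split by simp
  qed
qed


lemma sum_opt: "(\<Sum>i\<in>(UNIV::'a::finite option set). f i) = f None + (\<Sum>k\<in>UNIV. f (Some k))"
  by (simp add: UNIV_option_conv sum.reindex)

definition Zm :: "real^'n \<Rightarrow> real^'n^'n \<Rightarrow> real^'n^'n" where
  "Zm x X = (\<chi> k l. X$k$l - x$k * x$l)"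

lemma frobQ: "frob (Qmat A b c) (Ymat x X) = qf A b c x + frob A (Zm x X)"
  unfolding frob_def sum_opt qf_def Zm_def
  by (simp add: Qmat_def Ymat_def quad_expand inner_vec_def algebra_simps sum.distrib sum_subtractf
      sum_distrib_left matrix_vector_mult_def)

lemma Zpsd: assumes "psd (Ymat x X)" "sym_mat X" shows "psd (Zm x X)"
  unfolding psd_def
proof (intro conjI allI)
  show "sym_mat (Zm x X)" using sym_entry[OF assms(2)]
    by (simp add: sym_mat_def transpose_def Zm_def vec_eq_iff mult.commute)
  fix v :: "real^'a"
  define u :: "real^('a option)" where "u = (\<chi> i. case i of None \<Rightarrow> - (x \<bullet> v) | Some k \<Rightarrow> v$k)"
  have "0 \<le> u \<bullet> (Ymat x X *v u)" using assms(1) unfolding psd_def by auto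
  also have "\<dots> = v \<bullet> (Zm x X *v v)"
    unfolding quad_expand sum_opt
    by (simp add: u_def Ymat_def Zm_def inner_vec_def algebra_simps sum.distrib sum_subtractf
      sum_distrib_left sum_product power2_eq_square sum_negf)
  finally show "0 \<le> v \<bullet> (Zm x X *v v)" .
qed


lemma frob_Agam: "frob (Agam A0 A (g::real^'m::finite)) Z = frob A0 Z + (\<Sum>i\<in>UNIV. g$i * frob (A i) Z)"
proof -
  have "frob (Agam A0 A g) Z = frob A0 Z + (\<Sum>k\<in>UNIV. \<Sum>l\<in>UNIV. \<Sum>i\<in>UNIV. g$i * (A i$k$l * Z$k$l))"
    unfolding frob_def Agam_def by (simp add: sum_component algebra_simps sum.distrib sum_distrib_left sum_distrib_right)
  also have "(\<Sum>k\<in>UNIV. \<Sum>l\<in>UNIV. \<Sum>i\<in>UNIV. g$i * (A i$k$l * Z$k$l)) = (\<Sum>i\<in>UNIV. g$i * frob (A i) Z)"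
    unfolding frob_def sum_distrib_left
    by (subst sum.swap, rule sum.cong[OF refl], rule sum.swap)
  finally show ?thesis .
qed

lemma qgam_le:
  assumes "(x, t) \<in> DSDP A0 b0 c0 Ineq A b c" "g \<in> Gamma A0 Ineq A"
  shows "qgam A0 b0 c0 A b c g x \<le> 2 * t"
proof -
  obtain X where fs: "feasSDP Ineq A b c x X" and le: "frob (Qmat A0 b0 c0) (Ymat x X) \<le> 2 * t"
    using assms(1) unfolding DSDP_def by auto
  have psdY: "psd (Ymat x X)" and sX: "sym_mat X" using fs unfolding feasSDP_def by auto
  have pZ: "psd (Zm x X)" by (rule Zpsd[OF psdY sX])
  have pG: "psd (Agam A0 A g)" using assms(2) unfolding Gamma_def by auto
  have "0 \<le> frob (Agam A0 A g) (Zm x X)" by (rule psd_frob_aux[OF pG pZ])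
  have nonpos: "(\<Sum>i\<in>UNIV. g$i * frob (Qmat (A i) (b i) (c i)) (Ymat x X)) \<le> 0"
  proof (rule sum_nonpos)
    fix i
    show "g$i * frob (Qmat (A i) (b i) (c i)) (Ymat x X) \<le> 0"
    proof (cases "i \<in> Ineq")
      case True
      then have "0 \<le> g$i" using assms(2) unfolding Gamma_def by auto
      moreover have "frob (Qmat (A i) (b i) (c i)) (Ymat x X) \<le> 0" using fs True unfolding feasSDP_def by auto
      ultimately show ?thesis by (simp add: mult_nonneg_nonpos)
    next
      case False
      then show ?thesis using fs unfolding feasSDP_def by auto
    qed
  qed
  have "qgam A0 b0 c0 A b c g x + frob (Agam A0 A g) (Zm x X)
      = frob (Qmat A0 b0 c0) (Ymat x X) + (\<Sum>i\<in>UNIV. g$i * frob (Qmat (A i) (b i) (c i)) (Ymat x X))"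
    unfolding frob_Agam frobQ qgam_def by (simp add: algebra_simps sum.distrib)
  with nonpos le \<open>0 \<le> frob (Agam A0 A g) (Zm x X)\<close> show ?thesis by linarith
qed


lemma quad_lin: "(v::real^'k) \<bullet> ((M + s *\<^sub>R N) *v v) = v \<bullet> (M *v v) + s * (v \<bullet> (N *v v))"
  by (simp add: quad_expand sum.distrib sum_distrib_left algebra_simps)

lemma sym_lin: "sym_mat M \<Longrightarrow> sym_mat N \<Longrightarrow> sym_mat (M + s *\<^sub>R (N::real^'k^'k))"
  unfolding sym_mat_def by (simp add: transpose_def vec_eq_iff)

lemma cont_quad: "continuous_on S (\<lambda>v::real^'k. v \<bullet> (M *v v))"
proof -
  have "continuous_on S (\<lambda>v::real^'k. M *v v)"
    by (rule linear_continuous_on) (simp add: linear_conv_bounded_linear[symmetric])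
  then show ?thesis by (intro continuous_intros)
qed

lemma pd_perturb:
  assumes "pd (M::real^'k^'k)" "sym_mat N"
  shows "\<exists>e>0. \<forall>s. \<bar>s\<bar> < e \<longrightarrow> psd (M + s *\<^sub>R N)"
proof -
  let ?S = "sphere (0::real^'k) 1"
  have cS: "compact ?S" by simp
  obtain v0 :: "real^'k" where "norm v0 = 1" using vector_choose_size[of 1] by auto
  hence neS: "?S \<noteq> {}" by auto
  obtain vm where vm: "vm \<in> ?S" "\<forall>y\<in>?S. vm \<bullet> (M *v vm) \<le> y \<bullet> (M *v y)"
    using continuous_attains_inf[OF cS neS cont_quad] by blast
  define lam where "lam = vm \<bullet> (M *v vm)"
  have "vm \<noteq> 0" using vm(1) by auto
  hence lpos: "0 < lam" using assms(1) unfolding pd_def lam_def by auto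
  have cabs: "continuous_on ?S (\<lambda>v. \<bar>v \<bullet> (N *v v)\<bar>)" by (rule continuous_on_rabs[OF cont_quad])
  obtain vk where vk: "vk \<in> ?S" "\<forall>y\<in>?S. \<bar>y \<bullet> (N *v y)\<bar> \<le> \<bar>vk \<bullet> (N *v vk)\<bar>"
    using continuous_attains_sup[OF cS neS cabs] by blast
  define K where "K = \<bar>vk \<bullet> (N *v vk)\<bar>"
  have K0: "0 \<le> K" by (simp add: K_def)
  define e where "e = lam / (K + 1)"
  have epos: "0 < e" using lpos K0 by (simp add: e_def)
  have "psd (M + s *\<^sub>R N)" if s: "\<bar>s\<bar> < e" for s
    unfolding psd_def
  proof (intro conjI allI)
    show "sym_mat (M + s *\<^sub>R N)" using assms sym_lin unfolding pd_def by blast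
    fix v :: "real^'k"
    show "0 \<le> v \<bullet> ((M + s *\<^sub>R N) *v v)"
    proof (cases "v = 0")
      case True then show ?thesis by simp
    next
      case False
      define u where "u = (1 / norm v) *\<^sub>R v"
      have uS: "u \<in> ?S" using False by (simp add: u_def)
      have vu: "v = norm v *\<^sub>R u" using False by (simp add: u_def)
      have "\<bar>s\<bar> * K \<le> \<bar>s\<bar> * (K + 1)" by (simp add: distrib_left)
      also have "\<dots> < lam"
      proof -
        have kp: "0 < K + 1" using K0 by simp
        show ?thesis using s unfolding e_def using pos_less_divide_eq[OF kp] by (simp add: mult.commute)
      qed
      finally have sK: "\<bar>s\<bar> * K < lam" .
      have "\<bar>s * (u \<bullet> (N *v u))\<bar> \<le> \<bar>s\<bar> * K"
      proof -
        have "\<bar>u \<bullet> (N *v u)\<bar> \<le> K" using vk(2) uS unfolding K_def by blast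
        hence "\<bar>s\<bar> * \<bar>u \<bullet> (N *v u)\<bar> \<le> \<bar>s\<bar> * K" by (rule mult_left_mono) simp
        thus ?thesis by (simp only: abs_mult)
      qed
      moreover have "lam \<le> u \<bullet> (M *v u)" using vm(2) uS unfolding lam_def by auto
      ultimately have "0 \<le> u \<bullet> (M *v u) + s * (u \<bullet> (N *v u))" using sK by linarith
      hence "0 \<le> (norm v)^2 * (u \<bullet> ((M + s *\<^sub>R N) *v u))" by (simp add: quad_lin)
      moreover have "v \<bullet> ((M + s *\<^sub>R N) *v v) = (norm v *\<^sub>R u) \<bullet> ((M + s *\<^sub>R N) *v (norm v *\<^sub>R u))"
        using arg_cong[OF vu, of "\<lambda>w. w \<bullet> ((M + s *\<^sub>R N) *v w)"] by (simp only:)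
      ultimately show ?thesis by (simp only: quad_scale)
    qed
  qed
  hence "\<forall>s. \<bar>s\<bar> < e \<longrightarrow> psd (M + s *\<^sub>R N)" by simp
  with epos show ?thesis by (intro exI[of _ e]) simp
qed


lemma transpose_sum: "transpose (sum f S) = (\<Sum>x\<in>S. transpose (f x :: real^'k^'k))"
  by (simp add: transpose_def vec_eq_iff sum_component)
lemma transpose_add': "transpose (P + Q) = transpose P + transpose (Q :: real^'k^'k)"
  by (simp add: transpose_def vec_eq_iff)

lemma sym_Agam: assumes "sym_mat A0" "\<And>i. sym_mat (A i)" shows "sym_mat (Agam A0 A g)"
  using assms unfolding sym_mat_def Agam_def by (simp add: transpose_add' transpose_sum transpose_scalar)

lemma step_comp: "(g + s *\<^sub>R axis i 1) $ j = g $ j + (if j = i then s else 0)"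
  by (simp add: axis_def)

lemma Agam_step: "Agam A0 A (g + s *\<^sub>R axis i 1) = Agam A0 A g + s *\<^sub>R A i"
proof -
  have "(\<Sum>j\<in>UNIV. (g + s *\<^sub>R axis i 1) $ j *\<^sub>R A j) = (\<Sum>j\<in>UNIV. g $ j *\<^sub>R A j) + (\<Sum>j\<in>UNIV. if j = i then s *\<^sub>R A j else 0)"
    unfolding step_comp scaleR_add_left sum.distrib by (intro arg_cong2[where f="(+)"] refl sum.cong) simp_all
  also have "(\<Sum>j\<in>UNIV. if j = i then s *\<^sub>R A j else 0) = s *\<^sub>R A i" by (rule trans[OF sum.delta]) simp_all
  finally show ?thesis unfolding Agam_def by (simp add: algebra_simps)
qed

lemma qgam_step: "qgam A0 b0 c0 A b c (g + s *\<^sub>R axis i 1) x = qgam A0 b0 c0 A b c g x + s * qf (A i) (b i) (c i) x"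
proof -
  have "(\<Sum>j\<in>UNIV. (g + s *\<^sub>R axis i 1) $ j * qf (A j) (b j) (c j) x) = (\<Sum>j\<in>UNIV. g $ j * qf (A j) (b j) (c j) x) + (\<Sum>j\<in>UNIV. if j = i then s * qf (A j) (b j) (c j) x else 0)"
    unfolding step_comp distrib_right sum.distrib by (intro arg_cong2[where f="(+)"] refl sum.cong) simp_all
  also have "(\<Sum>j\<in>UNIV. if j = i then s * qf (A j) (b j) (c j) x else 0) = s * qf (A i) (b i) (c i) x" by (rule trans[OF sum.delta]) simp_all
  finally show ?thesis unfolding qgam_def by (simp add: algebra_simps)
qed

lemma definite_in_D:
  fixes A0 :: "real^'n::finite^'n" and A :: "'m::finite \<Rightarrow> real^'n^'n"
  assumes symA0: "sym_mat A0" and symA: "\<And>i. sym_mat (A i)"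
    and qle: "qgam A0 b0 c0 A b c g x \<le> 2 * t"
    and gF: "g \<in> Fface A0 b0 c0 Ineq A b c x" and pdg: "pd (Agam A0 A g)"
  shows "(x, t) \<in> Dset A0 b0 c0 Ineq A b c"
proof -
  have gG: "g \<in> Gamma A0 Ineq A" and gmax: "\<And>g'. g' \<in> Gamma A0 Ineq A \<Longrightarrow> qgam A0 b0 c0 A b c g' x \<le> qgam A0 b0 c0 A b c g x"
    using gF unfolding Fface_def by auto
  have gnn: "\<And>j. j \<in> Ineq \<Longrightarrow> 0 \<le> g$j" using gG unfolding Gamma_def by auto
  have loc: "\<exists>e>0. \<forall>s. \<bar>s\<bar> < e \<and> (i \<in> Ineq \<longrightarrow> 0 \<le> g$i + s) \<longrightarrow> s * qf (A i) (b i) (c i) x \<le> 0" for i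
  proof -
    obtain e where e: "e > 0" "\<And>s. \<bar>s\<bar> < e \<Longrightarrow> psd (Agam A0 A g + s *\<^sub>R A i)"
      using pd_perturb[OF pdg symA[of i]] by blast
    have "s * qf (A i) (b i) (c i) x \<le> 0" if s: "\<bar>s\<bar> < e" "i \<in> Ineq \<longrightarrow> 0 \<le> g$i + s" for s
    proof -
      have "g + s *\<^sub>R axis i 1 \<in> Gamma A0 Ineq A"
        unfolding Gamma_def
      proof (intro CollectI conjI ballI)
        show "psd (Agam A0 A (g + s *\<^sub>R axis i 1))" unfolding Agam_step using e(2)[OF s(1)] .
        fix j assume "j \<in> Ineq"
        then show "0 \<le> (g + s *\<^sub>R axis i 1) $ j" unfolding step_comp using s(2) gnn by auto
      qed
      from gmax[OF this] show ?thesis unfolding qgam_step by simp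
    qed
    with e(1) show ?thesis by blast
  qed
  have nonpos: "qf (A i) (b i) (c i) x \<le> 0" for i
  proof -
    obtain e where e: "e > 0" "\<forall>s. \<bar>s\<bar> < e \<and> (i \<in> Ineq \<longrightarrow> 0 \<le> g$i + s) \<longrightarrow> s * qf (A i) (b i) (c i) x \<le> 0"
      using loc[of i] by blast
    have "\<bar>e/2\<bar> < e \<and> (i \<in> Ineq \<longrightarrow> 0 \<le> g$i + e/2)" using e(1) gnn[of i] by auto
    hence "(e/2) * qf (A i) (b i) (c i) x \<le> 0" using e(2) by blast
    thus ?thesis using e(1) by (simp add: mult_le_0_iff)
  qed
  have zero: "qf (A i) (b i) (c i) x = 0" if "i \<notin> Ineq \<or> 0 < g$i" for i
  proof -
    obtain e where e: "e > 0" "\<forall>s. \<bar>s\<bar> < e \<and> (i \<in> Ineq \<longrightarrow> 0 \<le> g$i + s) \<longrightarrow> s * qf (A i) (b i) (c i) x \<le> 0"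
      using loc[of i] by blast
    define s where "s = - (if i \<in> Ineq then min (e/2) (g$i) else e/2)"
    have sneg: "s < 0" using e(1) that by (auto simp: s_def)
    have "\<bar>s\<bar> < e" using e(1) that gnn[of i] by (auto simp: s_def)
    moreover have "i \<in> Ineq \<longrightarrow> 0 \<le> g$i + s" by (auto simp: s_def)
    ultimately have "s * qf (A i) (b i) (c i) x \<le> 0" using e(2) by blast
    hence "0 \<le> qf (A i) (b i) (c i) x" using sneg by (simp add: mult_le_0_iff)
    with nonpos[of i] show ?thesis by simp
  qed
  have feas: "feasQ Ineq A b c x" unfolding feasQ_def using nonpos zero by auto
  have "(\<Sum>i\<in>UNIV. g$i * qf (A i) (b i) (c i) x) = 0"
  proof (rule sum.neutral, intro ballI)
    fix i
    show "g$i * qf (A i) (b i) (c i) x = 0"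
    proof (cases "i \<notin> Ineq \<or> 0 < g$i")
      case True then show ?thesis using zero by simp
    next
      case False then have "g$i = 0" using gnn[of i] by auto
      then show ?thesis by simp
    qed
  qed
  hence "qf A0 b0 c0 x \<le> 2 * t" using qle unfolding qgam_def by simp
  with feas show ?thesis unfolding Dset_def by simp
qed


definition Xo :: "real^'n \<Rightarrow> real^'n^'n" where "Xo x = (\<chi> k l. x$k * x$l)"

lemma Zm_Xo: "Zm x (Xo x) = 0" by (simp add: Zm_def Xo_def vec_eq_iff)

lemma frob_zero2: "frob P 0 = 0" by (simp add: frob_def)

lemma psd_Ymat_Xo: "psd (Ymat x (Xo x))"
  unfolding psd_def
proof (intro conjI allI)
  show "sym_mat (Ymat x (Xo x))"
    unfolding sym_mat_def transpose_def Ymat_def Xo_def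
    by (simp add: vec_eq_iff split: option.split)
  fix u :: "real^('a option)"
  have "u \<bullet> (Ymat x (Xo x) *v u) = (u$None + (\<Sum>k\<in>UNIV. x$k * u$(Some k)))^2"
    unfolding quad_expand sum_opt
    by (simp add: Ymat_def Xo_def power2_eq_square algebra_simps sum.distrib sum_distrib_left sum_product)
  thus "0 \<le> u \<bullet> (Ymat x (Xo x) *v u)" by simp
qed

lemma sym_Xo: "sym_mat (Xo x)"
  unfolding sym_mat_def transpose_def Xo_def by (simp add: vec_eq_iff mult.commute)

lemma feasQ_SDP: assumes "feasQ Ineq A b c x" shows "feasSDP Ineq A b c x (Xo x)"
proof -
  have e: "frob (Qmat (A i) (b i) (c i)) (Ymat x (Xo x)) = qf (A i) (b i) (c i) x" for i
    unfolding frobQ Zm_Xo frob_zero2 by simp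
  show ?thesis unfolding feasSDP_def e using assms sym_Xo psd_Ymat_Xo unfolding feasQ_def by blast
qed

lemma D_sub: "Dset A0 b0 c0 Ineq A b c \<subseteq> DSDP A0 b0 c0 Ineq A b c"
proof
  fix p assume "p \<in> Dset A0 b0 c0 Ineq A b c"
  then obtain x t where p: "p = (x, t)" "qf A0 b0 c0 x \<le> 2 * t" "feasQ Ineq A b c x"
    unfolding Dset_def by auto
  have "frob (Qmat A0 b0 c0) (Ymat x (Xo x)) = qf A0 b0 c0 x" unfolding frobQ Zm_Xo frob_zero2 by simp
  with p feasQ_SDP[OF p(3)] show "p \<in> DSDP A0 b0 c0 Ineq A b c" unfolding DSDP_def by auto
qed

lemma quad_comb: "(w::real^'k) \<bullet> ((u *\<^sub>R P + v *\<^sub>R Q) *v w) = u * (w \<bullet> (P *v w)) + v * (w \<bullet> (Q *v w))"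
  by (simp add: quad_expand sum.distrib sum_distrib_left algebra_simps)

lemma psd_comb: "psd P \<Longrightarrow> psd Q \<Longrightarrow> 0 \<le> u \<Longrightarrow> 0 \<le> v \<Longrightarrow> psd (u *\<^sub>R P + v *\<^sub>R (Q::real^'k^'k))"
  unfolding psd_def quad_comb sym_mat_def by (simp add: transpose_def vec_eq_iff)

lemma frob_comb: "frob P (u *\<^sub>R Y1 + v *\<^sub>R Y2) = u * frob P Y1 + v * frob P Y2"
  by (simp add: frob_def sum.distrib sum_distrib_left algebra_simps)

lemma Ymat_comb: "u + v = 1 \<Longrightarrow> Ymat (u *\<^sub>R x1 + v *\<^sub>R x2) (u *\<^sub>R X1 + v *\<^sub>R X2) = u *\<^sub>R Ymat x1 X1 + v *\<^sub>R Ymat x2 X2"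
  by (simp add: Ymat_def vec_eq_iff split: option.split)

lemma convex_DSDP: "convex (DSDP A0 b0 c0 Ineq A b c)"
  unfolding convex_def
proof (intro ballI allI impI)
  fix p q :: "(real^'a) \<times> real" and u v :: real
  assume p: "p \<in> DSDP A0 b0 c0 Ineq A b c" and q: "q \<in> DSDP A0 b0 c0 Ineq A b c"
    and uv: "0 \<le> u" "0 \<le> v" "u + v = 1"
  obtain x1 t1 X1 where p': "p = (x1, t1)" "feasSDP Ineq A b c x1 X1" "frob (Qmat A0 b0 c0) (Ymat x1 X1) \<le> 2 * t1"
    using p unfolding DSDP_def by auto
  obtain x2 t2 X2 where q': "q = (x2, t2)" "feasSDP Ineq A b c x2 X2" "frob (Qmat A0 b0 c0) (Ymat x2 X2) \<le> 2 * t2"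
    using q unfolding DSDP_def by auto
  define X where "X = u *\<^sub>R X1 + v *\<^sub>R X2"
  have Y: "Ymat (u *\<^sub>R x1 + v *\<^sub>R x2) X = u *\<^sub>R Ymat x1 X1 + v *\<^sub>R Ymat x2 X2"
    unfolding X_def by (rule Ymat_comb[OF uv(3)])
  have fs: "feasSDP Ineq A b c (u *\<^sub>R x1 + v *\<^sub>R x2) X"
    unfolding feasSDP_def Y frob_comb
  proof (intro conjI ballI allI impI)
    show "sym_mat X" using p'(2) q'(2) unfolding feasSDP_def X_def sym_mat_def by (simp add: transpose_def vec_eq_iff)
    show "psd (u *\<^sub>R Ymat x1 X1 + v *\<^sub>R Ymat x2 X2)" using p'(2) q'(2) uv unfolding feasSDP_def by (intro psd_comb) auto
    fix i
    { assume "i \<in> Ineq"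
      then have "frob (Qmat (A i) (b i) (c i)) (Ymat x1 X1) \<le> 0" "frob (Qmat (A i) (b i) (c i)) (Ymat x2 X2) \<le> 0"
        using p'(2) q'(2) unfolding feasSDP_def by auto
      then show "u * frob (Qmat (A i) (b i) (c i)) (Ymat x1 X1) + v * frob (Qmat (A i) (b i) (c i)) (Ymat x2 X2) \<le> 0"
        using uv by (simp add: add_nonpos_nonpos mult_nonneg_nonpos) }
    { assume "i \<notin> Ineq"
      then show "u * frob (Qmat (A i) (b i) (c i)) (Ymat x1 X1) + v * frob (Qmat (A i) (b i) (c i)) (Ymat x2 X2) = 0"
        using p'(2) q'(2) unfolding feasSDP_def by auto }
  qed
  have "frob (Qmat A0 b0 c0) (Ymat (u *\<^sub>R x1 + v *\<^sub>R x2) X) \<le> 2 * (u * t1 + v * t2)"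
    unfolding Y frob_comb
  proof -
    have "u * frob (Qmat A0 b0 c0) (Ymat x1 X1) \<le> u * (2 * t1)" using p'(3) uv(1) by (rule mult_left_mono)
    moreover have "v * frob (Qmat A0 b0 c0) (Ymat x2 X2) \<le> v * (2 * t2)" using q'(3) uv(2) by (rule mult_left_mono)
    ultimately show "u * frob (Qmat A0 b0 c0) (Ymat x1 X1) + v * frob (Qmat A0 b0 c0) (Ymat x2 X2) \<le> 2 * (u * t1 + v * t2)"
      by (simp add: algebra_simps)
  qed
  with fs show "u *\<^sub>R p + v *\<^sub>R q \<in> DSDP A0 b0 c0 Ineq A b c"
    unfolding DSDP_def p'(1) q'(1) by auto
qed



lemma DSDP_sub_hull:
  fixes A0 :: "real^'n::finite^'n" and b0 :: "real^'n" and c0 :: real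
    and A :: "'m::finite \<Rightarrow> real^'n^'n" and b :: "'m \<Rightarrow> real^'n" and c :: "'m \<Rightarrow> real"
    and Ineq :: "'m set"
  assumes symA0: "sym_mat A0"
    and symA: "\<And>i. sym_mat (A i)"
    and B_att: "\<And>x. bdd_above ((\<lambda>g. qgam A0 b0 c0 A b c g x) ` Gamma A0 Ineq A) \<Longrightarrow>
        (\<exists>g\<in>Gamma A0 Ineq A. \<forall>g'\<in>Gamma A0 Ineq A.
            qgam A0 b0 c0 A b c g' x \<le> qgam A0 b0 c0 A b c g x)"
    and decomp: "\<And>x t. (x, t) \<in> DSDP A0 b0 c0 Ineq A b c \<Longrightarrow>
        semidefinite_face A0 A (Fface A0 b0 c0 Ineq A b c x) \<Longrightarrow>
        (\<exists>S u. finite S \<and> S \<subseteq> DSDP A0 b0 c0 Ineq A b c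
           \<and> (\<forall>p\<in>S. 0 \<le> u p) \<and> sum u S = 1 \<and> (\<Sum>p\<in>S. u p *\<^sub>R p) = (x, t)
           \<and> (\<forall>p\<in>S. aff_dim (Fface A0 b0 c0 Ineq A b c (fst p))
                       > aff_dim (Fface A0 b0 c0 Ineq A b c x)))"
  shows "DSDP A0 b0 c0 Ineq A b c \<subseteq> convex hull (Dset A0 b0 c0 Ineq A b c)"
proof -
  let ?F = "Fface A0 b0 c0 Ineq A b c"
  let ?D = "Dset A0 b0 c0 Ineq A b c"
  let ?S = "DSDP A0 b0 c0 Ineq A b c"
  define d where "d = int DIM(real^'m)"
  have dle: "aff_dim (?F x) \<le> d" for x unfolding d_def by (rule aff_dim_le_DIM)
  have main: "\<forall>x t. (x, t) \<in> ?S \<and> nat (d - aff_dim (?F x)) = n \<longrightarrow> (x, t) \<in> convex hull ?D" for n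
  proof (induction n rule: less_induct)
    case (less n)
    show ?case
    proof (intro allI impI, elim conjE)
      fix x t assume xt: "(x, t) \<in> ?S" and nx: "nat (d - aff_dim (?F x)) = n"
      have "bdd_above ((\<lambda>g. qgam A0 b0 c0 A b c g x) ` Gamma A0 Ineq A)"
        using qgam_le[OF xt] by (intro bdd_aboveI2) auto
      then obtain g where g: "g \<in> Gamma A0 Ineq A" "\<forall>g'\<in>Gamma A0 Ineq A. qgam A0 b0 c0 A b c g' x \<le> qgam A0 b0 c0 A b c g x"
        using B_att by blast
      have gF: "g \<in> ?F x" using g unfolding Fface_def by auto
      show "(x, t) \<in> convex hull ?D"
      proof (cases "\<exists>g'\<in>?F x. pd (Agam A0 A g')")
        case True
        then obtain g' where g': "g' \<in> ?F x" "pd (Agam A0 A g')" by blast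
        have "g' \<in> Gamma A0 Ineq A" using g'(1) unfolding Fface_def by auto
        from qgam_le[OF xt this] have "(x, t) \<in> ?D" by (rule definite_in_D[OF symA0 symA _ g'(1) g'(2)])
        thus ?thesis by (rule hull_inc)
      next
        case False
        hence "semidefinite_face A0 A (?F x)" unfolding semidefinite_face_def using gF by auto
        from decomp[OF xt this] obtain S u where Su: "finite S" "S \<subseteq> ?S" "\<forall>p\<in>S. 0 \<le> u p" "sum u S = 1"
          "(\<Sum>p\<in>S. u p *\<^sub>R p) = (x, t)" "\<forall>p\<in>S. aff_dim (?F (fst p)) > aff_dim (?F x)" by blast
        have "(\<Sum>p\<in>S. u p *\<^sub>R p) \<in> convex hull ?D"
        proof (rule convex_sum[OF Su(1) convex_convex_hull Su(4)])
          fix p assume p: "p \<in> S"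
          show "0 \<le> u p" using Su(3) p by auto
          have lt: "nat (d - aff_dim (?F (fst p))) < n"
            using Su(6) p nx dle[of x] dle[of "fst p"] by auto
          have "(fst p, snd p) \<in> ?S" using Su(2) p by auto
          with less.IH[OF lt] have "(fst p, snd p) \<in> convex hull ?D" by blast
          thus "p \<in> convex hull ?D" by simp
        qed
        thus ?thesis using Su(5) by simp
      qed
    qed
  qed
  show ?thesis
  proof
    fix p assume "p \<in> ?S"
    then have "(fst p, snd p) \<in> ?S" by simp
    with main show "p \<in> convex hull ?D" by fastforce
  qed
qed

lemma hull_min_val:
  fixes S :: "((real^'n) \<times> real) set"
  assumes "finite S" "\<forall>p\<in>S. 0 \<le> u p" "sum u S = 1" "(\<Sum>p\<in>S. u p *\<^sub>R p) = (x, t)"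
    and "\<forall>p\<in>S. f (fst p) \<le> 2 * snd p"
  shows "\<exists>p\<in>S. f (fst p) \<le> 2 * t"
proof -
  have ne: "S \<noteq> {}" using assms(3) by auto
  define m where "m = Min ((\<lambda>p. f (fst p)) ` S)"
  have "m \<in> (\<lambda>p. f (fst p)) ` S" unfolding m_def using assms(1) ne by (intro Min_in) auto
  then obtain p where p: "p \<in> S" "f (fst p) = m" by auto
  have mle: "m \<le> f (fst q)" if "q \<in> S" for q using assms(1) that unfolding m_def by auto
  have "m = (\<Sum>q\<in>S. u q * m)" using assms(3) by (simp add: sum_distrib_right[symmetric])
  also have "\<dots> \<le> (\<Sum>q\<in>S. u q * (2 * snd q))"
  proof (rule sum_mono)
    fix q assume q: "q \<in> S"
    have "m \<le> 2 * snd q" using mle[OF q] assms(5) q by force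
    thus "u q * m \<le> u q * (2 * snd q)" using assms(2) q by (intro mult_left_mono) auto
  qed
  also have "\<dots> = 2 * snd (\<Sum>q\<in>S. u q *\<^sub>R q)" by (simp add: snd_sum sum_distrib_left algebra_simps)
  also have "\<dots> = 2 * t" using assms(4) by simp
  finally show ?thesis using p by auto
qed



theorem mainTheorem4:
  fixes A0 :: "real^'n::finite^'n" and b0 :: "real^'n" and c0 :: real
    and A :: "'m::finite \<Rightarrow> real^'n^'n" and b :: "'m \<Rightarrow> real^'n" and c :: "'m \<Rightarrow> real"
    and Ineq :: "'m set"
  assumes symA0: "sym_mat A0"
    and symA: "\<And>i. sym_mat (A i)"
    and A_feas: "\<exists>x. feasQ Ineq A b c x"
    and A_pd: "\<exists>g::real^'m. (\<forall>i\<in>Ineq. 0 \<le> g$i) \<and> pd (Agam A0 A g)"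
    and B_att: "\<And>x. bdd_above ((\<lambda>g. qgam A0 b0 c0 A b c g x) ` Gamma A0 Ineq A) \<Longrightarrow>
        (\<exists>g\<in>Gamma A0 Ineq A. \<forall>g'\<in>Gamma A0 Ineq A.
            qgam A0 b0 c0 A b c g' x \<le> qgam A0 b0 c0 A b c g x)"
    and decomp: "\<And>x t. (x, t) \<in> DSDP A0 b0 c0 Ineq A b c \<Longrightarrow>
        semidefinite_face A0 A (Fface A0 b0 c0 Ineq A b c x) \<Longrightarrow>
        (\<exists>S u. finite S \<and> S \<subseteq> DSDP A0 b0 c0 Ineq A b c
           \<and> (\<forall>p\<in>S. 0 \<le> u p) \<and> sum u S = 1 \<and> (\<Sum>p\<in>S. u p *\<^sub>R p) = (x, t)
           \<and> (\<forall>p\<in>S. aff_dim (Fface A0 b0 c0 Ineq A b c (fst p))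
                       > aff_dim (Fface A0 b0 c0 Ineq A b c x)))"
  shows "convex hull (Dset A0 b0 c0 Ineq A b c) = DSDP A0 b0 c0 Ineq A b c
    \<and> Opt A0 b0 c0 Ineq A b c = OptSDP A0 b0 c0 Ineq A b c"
proof -
  let ?D = "Dset A0 b0 c0 Ineq A b c"
  let ?S = "DSDP A0 b0 c0 Ineq A b c"
  have hullEq: "convex hull ?D = ?S"
  proof
    show "convex hull ?D \<subseteq> ?S" using hull_minimal[of ?D ?S convex] D_sub convex_DSDP by blast
    show "?S \<subseteq> convex hull ?D" by (rule DSDP_sub_hull[OF symA0 symA B_att decomp]) blast+
  qed
  have le1: "OptSDP A0 b0 c0 Ineq A b c \<le> Opt A0 b0 c0 Ineq A b c"
    unfolding Opt_def
  proof (rule INF_greatest)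
    fix x assume "x \<in> {x. feasQ Ineq A b c x}"
    hence fx: "feasSDP Ineq A b c x (Xo x)" by (simp add: feasQ_SDP)
    have e: "frob (Qmat A0 b0 c0) (Ymat x (Xo x)) = qf A0 b0 c0 x" unfolding frobQ Zm_Xo frob_zero2 by simp
    have "OptSDP A0 b0 c0 Ineq A b c \<le> ereal (frob (Qmat A0 b0 c0) (Ymat (fst (x, Xo x)) (snd (x, Xo x))))"
      unfolding OptSDP_def by (rule INF_lower) (use fx in simp)
    thus "OptSDP A0 b0 c0 Ineq A b c \<le> ereal (qf A0 b0 c0 x)" using e by simp
  qed
  have le2: "Opt A0 b0 c0 Ineq A b c \<le> OptSDP A0 b0 c0 Ineq A b c"
    unfolding OptSDP_def
  proof (rule INF_greatest)
    fix xX assume "xX \<in> {(x, X). feasSDP Ineq A b c x X}"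
    then obtain x X where xX: "xX = (x, X)" "feasSDP Ineq A b c x X" by auto
    define v where "v = frob (Qmat A0 b0 c0) (Ymat x X)"
    have "(x, v / 2) \<in> ?S" unfolding DSDP_def v_def using xX(2) by auto
    hence "(x, v / 2) \<in> convex hull ?D" using hullEq by simp
    then obtain S u where Su: "finite S" "S \<subseteq> ?D" "\<forall>p\<in>S. 0 \<le> u p" "sum u S = 1"
      "(\<Sum>p\<in>S. u p *\<^sub>R p) = (x, v / 2)"
      unfolding convex_hull_explicit by blast
    have "\<forall>p\<in>S. qf A0 b0 c0 (fst p) \<le> 2 * snd p" using Su(2) unfolding Dset_def by auto
    from hull_min_val[OF Su(1) Su(3) Su(4) Su(5) this] obtain p where p: "p \<in> S" "qf A0 b0 c0 (fst p) \<le> 2 * (v / 2)"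
      by blast
    have "feasQ Ineq A b c (fst p)" using Su(2) p(1) unfolding Dset_def by auto
    hence "Opt A0 b0 c0 Ineq A b c \<le> ereal (qf A0 b0 c0 (fst p))" unfolding Opt_def by (intro INF_lower) simp
    also have "\<dots> \<le> ereal v" using p(2) by simp
    finally show "Opt A0 b0 c0 Ineq A b c \<le> ereal (frob (Qmat A0 b0 c0) (Ymat (fst xX) (snd xX)))"
      using xX(1) v_def by simp
  qed
  show ?thesis using hullEq le1 le2 by simp
qed


end
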